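(* Let $D$ be a probability distribution on a finite set $\Omega$ with $m=\log|\Omega|\ge2$, and let $\varepsilon>0$, $\delta\in(0,1)$. Given access to $\mathsf{PROC}$ for $D$, the algorithm $\mathsf{EntropyEstimation}(\varepsilon,\delta)$ returns $\hat h$ satisfying $$\Pr\big[(1-\varepsilon)H(D)\le\hat h\le(1+\varepsilon)H(D)\big]\ge1-\delta,$$ where $H(D)=\sum_{x\in\Omega}D(x)\log\frac1{D(x)}$ is the Shannon entropy.
   Context: All logarithms are base 2, with $0\log\frac10=0$. A probability-revealing conditional sampling oracle $\mathsf{PROC}$ for $D$, on query $S\subseteq\Omega$ with $D(S)>0$, returns a pair $(x,D(x))$ where $x\in S$ is drawn with probability $D(x)/\sum_{y\in S}D(y)$, independently across queries (it returns the unconditional probability $D(x)$). The subroutine $\mathsf{SampleEst}(\bar S,t,\delta')$: set $T=\lceil\frac92\log\frac2{\delta'}\rceil$; for $i=1,\dots,T$, make $t$ queries $\mathsf{PROC}(\Omega\setminus\bar S)$ obtaining $(y_{ij},r_{ij})_{j\le t}$ and let $C_i=\frac1t\sum_{j=1}^t\log\frac1{r_{ij}}$; return the median of $C_1,\dots,C_T$. The algorithm $\mathsf{EntropyEstimation}(\varepsilon,\delta)$: for $i=1,\dots,\lceil\log(10/\delta)\rceil$: query $(x,r)\gets\mathsf{PROC}(\Omega)$; if $r>1/2$, set $t=\lceil\frac6{\varepsilon^2}(m+\log(m+\log m+2.5))\rceil$, compute $\hat h_{rem}=\mathsf{SampleEst}(\{x\},t,0.9\delta)$, and return $\hat h=(1-r)\hat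 h_{rem}+r\log\frac1r$ (provided $r<1$; if $r=1$ return $0$). If no round has $r>1/2$, set $t=\lceil\frac6{\varepsilon^2}(m+\log(m+\log m+1.1)-1)\rceil$ and return $\hat h=\mathsf{SampleEst}(\varnothing,t,0.9\delta)$. *)

theory Defs
  imports "HOL-Probability.Probability"
begin

text \<open>Logarithms are base 2 (log 2). Note log 2 0 = 0 in Isabelle, so 0 * log(1/0) = 0.\<close>

definition shannon_entropy :: "'a pmf \<Rightarrow> 'a set \<Rightarrow> real" where
  "shannon_entropy D \<Omega> = (\<Sum>x\<in>\<Omega>. pmf D x * log 2 (1 / pmf D x))"

text \<open>Probability-revealing conditional sampling oracle: query S returns (x, D x)
  with x drawn from D conditioned on S (requires D(S) > 0).\<close>
definition PROC :: "'a pmf \<Rightarrow> 'a set \<Rightarrow> ('a \<times> real) pmf" where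
  "PROC D S = map_pmf (\<lambda>x. (x, pmf D x)) (cond_pmf D S)"

fun iid_pmf :: "nat \<Rightarrow> 'b pmf \<Rightarrow> 'b list pmf" where
  "iid_pmf 0 p = return_pmf []"
| "iid_pmf (Suc n) p = bind_pmf p (\<lambda>x. map_pmf (Cons x) (iid_pmf n p))"

text \<open>Median of a nonempty list of reals (lower median for even length).\<close>
definition median :: "real list \<Rightarrow> real" where
  "median xs = sort xs ! ((length xs - 1) div 2)"

definition SampleEst_T :: "real \<Rightarrow> nat" where
  "SampleEst_T \<delta>' = nat \<lceil>9 / 2 * log 2 (2 / \<delta>')\<rceil>"

definition SampleEst_round :: "'a pmf \<Rightarrow> 'a set \<Rightarrow> 'a set \<Rightarrow> nat \<Rightarrow> real pmf" where
  "SampleEst_round D \<Omega> Sbar t =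
     map_pmf (\<lambda>ys. (\<Sum>y\<leftarrow>ys. log 2 (1 / snd y)) / real t) (iid_pmf t (PROC D (\<Omega> - Sbar)))"

definition SampleEst :: "'a pmf \<Rightarrow> 'a set \<Rightarrow> 'a set \<Rightarrow> nat \<Rightarrow> real \<Rightarrow> real pmf" where
  "SampleEst D \<Omega> Sbar t \<delta>' =
     map_pmf median (iid_pmf (SampleEst_T \<delta>') (SampleEst_round D \<Omega> Sbar t))"

definition t_heavy :: "real \<Rightarrow> real \<Rightarrow> nat" where
  "t_heavy m \<epsilon> = nat \<lceil>6 / \<epsilon>\<^sup>2 * (m + log 2 (m + log 2 m + 2.5))\<rceil>"

definition t_light :: "real \<Rightarrow> real \<Rightarrow> nat" where
  "t_light m \<epsilon> = nat \<lceil>6 / \<epsilon>\<^sup>2 * (m + log 2 (m + log 2 m + 1.1) - 1)\<rceil>"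

fun EE_loop :: "'a pmf \<Rightarrow> 'a set \<Rightarrow> real \<Rightarrow> real \<Rightarrow> nat \<Rightarrow> real pmf" where
  "EE_loop D \<Omega> \<epsilon> \<delta> 0 =
     SampleEst D \<Omega> {} (t_light (log 2 (card \<Omega>)) \<epsilon>) (0.9 * \<delta>)"
| "EE_loop D \<Omega> \<epsilon> \<delta> (Suc k) =
     bind_pmf (PROC D \<Omega>) (\<lambda>(x, r).
       if r > 1/2 then
         (if r = 1 then return_pmf 0
          else map_pmf (\<lambda>h. (1 - r) * h + r * log 2 (1 / r))
                 (SampleEst D \<Omega> {x} (t_heavy (log 2 (card \<Omega>)) \<epsilon>) (0.9 * \<delta>)))
       else EE_loop D \<Omega> \<epsilon> \<delta> k)"

definition EntropyEstimation :: "'a pmf \<Rightarrow> 'a set \<Rightarrow> real \<Rightarrow> real \<Rightarrow> real pmf" where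
  "EntropyEstimation D \<Omega> \<epsilon> \<delta> = EE_loop D \<Omega> \<epsilon> \<delta> (nat \<lceil>log 2 (10 / \<delta>)\<rceil>)"

end

theory Submission
  imports Defs
begin


lemma ln2_half: "ln (2::real) \<ge> 1/2"
proof -
  have "ln (exp (1/2::real)) \<le> ln 2" using exp_half_le2 by (subst ln_le_cancel_iff) auto
  then show ?thesis by simp
qed

lemma powr_exp_lower:
  assumes "u \<ge> 0" shows "(2::real) powr u \<ge> 1 + u/2 + u^2/8"
proof -
  have l: "ln (2::real) \<ge> 1/2" by (rule ln2_half)
  have "(2::real) powr u = exp (u * ln 2)" by (simp add: powr_def mult.commute)
  also have "\<dots> \<ge> 1 + u * ln 2 + (u * ln 2)^2 / 2"
    by (rule exp_lower_Taylor_quadratic) (use assms in simp)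
  finally have a: "(2::real) powr u \<ge> 1 + u * ln 2 + (u * ln 2)^2 / 2" .
  have b: "u * ln 2 \<ge> u / 2" using l assms by (simp add: mult_left_mono[of "1/2" "ln 2" u, simplified])
  have "(u * ln 2)^2 \<ge> (u/2)^2" using b assms by (intro power_mono) auto
  then show ?thesis using a b by (simp add: power_divide)
qed

lemma pow_ge:
  assumes "m \<ge> (2::real)" shows "2 powr m \<ge> m + 2"
proof -
  have "2 powr m = 4 * 2 powr (m - 2)" by (simp add: powr_diff)
  also have "\<dots> \<ge> 4 * (1 + (m-2)/2)"
    using powr_exp_lower[of "m-2"] assms by (smt (verit) zero_le_power2 divide_nonneg_pos)
  moreover have "4 * (1 + (m-2)/2) = 2*m" by (simp add: field_simps)
  ultimately show ?thesis using assms by linarith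
qed

lemma tail_mono:
  fixes M L :: real
  assumes M: "6 \<le> M" and hML: "M \<le> L"
  shows "L^2 * 2 powr (-L) \<le> M^2 * 2 powr (-M)"
proof -
  define u where "u = L - M"
  have u: "u \<ge> 0" using hML by (simp add: u_def)
  have "L^2 = M^2 * (1 + u/M)^2" using M by (simp add: u_def field_simps power2_eq_square)
  also have "(1 + u/M)^2 \<le> (1 + u/6)^2"
  proof -
    have "u/M \<le> u/6" using M u by (intro divide_left_mono) auto
    then show ?thesis using M u by (intro power_mono) auto
  qed
  also have "(1 + u/6)^2 \<le> 2 powr u"
  proof -
    have "(1 + u/6)^2 = 1 + u/3 + u^2/36" by (simp add: power2_eq_square field_simps)
    also have "\<dots> \<le> 1 + u/2 + u^2/8"
    proof -
      have "u^2/36 \<le> u^2/8" by (intro divide_left_mono) auto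
      then show ?thesis using u by linarith
    qed
    finally show ?thesis using powr_exp_lower[OF u] by linarith
  qed
  finally have "L^2 \<le> M^2 * 2 powr u" using M by (simp add: mult_left_mono)
  then have "L^2 * 2 powr (-L) \<le> M^2 * 2 powr u * 2 powr (-L)" by (simp add: mult_right_mono)
  also have "\<dots> = M^2 * 2 powr (-M)"
    by (simp add: u_def powr_add[symmetric])
  finally show ?thesis .
qed

lemma light_point:
  fixes w M :: real
  assumes w0: "0 \<le> w" and w1: "w \<le> 1/2" and M: "6 \<le> M"
  shows "w * (log 2 (1/w))^2 \<le> w * ((M+1) * log 2 (1/w) - M)
           + (if log 2 (1/w) > M then 2 powr (-M) * (M * (M+1)) else 0)"
proof (cases "w = 0")
  case True then show ?thesis using M by simp
next
  case False
  then have wp: "w > 0" using w0 by simp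
  define L where "L = log 2 (1/w)"
  have L1: "L \<ge> 1" unfolding L_def using wp w1 by (simp add: le_log_iff field_simps)
  have wL: "w = 2 powr (-L)" unfolding L_def using wp by (simp add: powr_minus)
  show ?thesis
  proof (cases "L > M")
    case True
    have "w * L^2 \<le> M^2 * 2 powr (-M)" using tail_mono[OF M] True wL by (simp add: mult.commute)
    also have "\<dots> \<le> 2 powr (-M) * (M * (M+1))" using M by (simp add: power2_eq_square algebra_simps)
    also have "\<dots> \<le> w * ((M+1) * L - M) + 2 powr (-M) * (M * (M+1))"
    proof -
      have "(M+1) * L \<ge> (M+1) * 1" using L1 M by (intro mult_left_mono) auto
      then have "(M+1) * L - M \<ge> 0" by simp
      then show ?thesis using wp by simp
    qed
    finally show ?thesis using True by (simp add: L_def[symmetric])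
  next
    case False
    have "(L - 1) * (M - L) \<ge> 0" using False L1 by simp
    then have "L^2 \<le> (M+1) * L - M" by (simp add: algebra_simps power2_eq_square)
    then have "w * L^2 \<le> w * ((M+1) * L - M)" using wp by simp
    then show ?thesis using False by (simp add: L_def[symmetric])
  qed
qed

lemma heavy_point:
  fixes q M :: real
  assumes q0: "0 \<le> q" and q1: "q \<le> 1" and M: "6 \<le> M"
  shows "q * (log 2 (1/q))^2 \<le> M * (q * log 2 (1/q)) + (if log 2 (1/q) > M then 2 powr (-M) * M^2 else 0)"
proof (cases "q = 0")
  case True then show ?thesis using M by simp
next
  case False
  then have qp: "q > 0" using q0 by simp
  define L where "L = log 2 (1/q)"
  have L0: "L \<ge> 0" unfolding L_def using qp q1 by simp
  have wL: "q = 2 powr (-L)" unfolding L_def using qp by (simp add: powr_minus)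
  show ?thesis
  proof (cases "L > M")
    case True
    have "q * L^2 \<le> M^2 * 2 powr (-M)" using tail_mono[OF M] True wL by (simp add: mult.commute)
    also have "\<dots> \<le> M * (q * L) + 2 powr (-M) * M^2" using M qp L0 by (simp add: mult.commute)
    finally show ?thesis using True by (simp add: L_def[symmetric])
  next
    case False
    have "q * L^2 \<le> M * (q * L)" using False L0 qp by (simp add: power2_eq_square mult_left_mono mult_right_mono mult.assoc mult.left_commute)
    then show ?thesis using False by (simp add: L_def[symmetric])
  qed
qed

lemma card_tail:
  fixes m M :: real
  assumes fin: "finite A" and card: "real (card A) \<le> 2 powr m" and c0: "0 \<le> c"
    and f: "\<And>x. x \<in> A \<Longrightarrow> f x \<le> c" 
  shows "(\<Sum>x\<in>A. f x) \<le> 2 powr m * c"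
proof -
  have "(\<Sum>x\<in>A. f x) \<le> (\<Sum>x\<in>A. c)" by (rule sum_mono) (rule f)
  also have "\<dots> = real (card A) * c" by simp
  also have "\<dots> \<le> 2 powr m * c" using card c0 by (rule mult_right_mono)
  finally show ?thesis .
qed

lemma K_light_ge: assumes "m \<ge> (2::real)" shows "m + log 2 (m + log 2 m + 1.1) - 1 \<ge> m + 1"
proof -
  have "log 2 m \<ge> 1" using assms by (simp add: le_log_iff)
  then have "m + log 2 m + 1.1 \<ge> 4" using assms by linarith
  then have "log 2 (m + log 2 m + 1.1) \<ge> 2" by (simp add: le_log_iff)
  then show ?thesis by linarith
qed

lemma K_heavy_ge: assumes "m \<ge> (2::real)" shows "m + log 2 (m + log 2 m + 2.5) \<ge> m + 2"
proof -
  have "log 2 m \<ge> 1" using assms by (simp add: le_log_iff)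
  then have "m + log 2 m + 2.5 \<ge> 4" using assms by linarith
  then have "log 2 (m + log 2 m + 2.5) \<ge> 2" by (simp add: le_log_iff)
  then show ?thesis by linarith
qed

lemma var_expand:
  fixes w f :: "'a \<Rightarrow> real"
  assumes "(\<Sum>x\<in>A. w x) = 1" "(\<Sum>x\<in>A. w x * f x) = H"
  shows "(\<Sum>x\<in>A. w x * (f x - H)^2) = (\<Sum>x\<in>A. w x * (f x)^2) - H^2"
proof -
  have "(\<Sum>x\<in>A. w x * (f x - H)^2) = (\<Sum>x\<in>A. w x * (f x)^2 - 2 * H * (w x * f x) + H^2 * w x)"
    by (intro sum.cong refl) (simp add: power2_eq_square algebra_simps)
  also have "\<dots> = (\<Sum>x\<in>A. w x * (f x)^2) - 2 * H * (\<Sum>x\<in>A. w x * f x) + H^2 * (\<Sum>x\<in>A. w x)"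
    by (simp add: sum.distrib sum_subtractf sum_distrib_left)
  also have "\<dots> = (\<Sum>x\<in>A. w x * (f x)^2) - H^2" using assms by (simp add: power2_eq_square)
  finally show ?thesis .
qed

lemma light_var:
  fixes w :: "'a \<Rightarrow> real" and m :: real
  assumes fin: "finite A" and card: "real (card A) \<le> 2 powr m" and m2: "m \<ge> 2"
    and w0: "\<And>x. x \<in> A \<Longrightarrow> 0 \<le> w x" and w1: "\<And>x. x \<in> A \<Longrightarrow> w x \<le> 1/2"
    and s1: "(\<Sum>x\<in>A. w x) = 1"
    and H: "H = (\<Sum>x\<in>A. w x * log 2 (1 / w x))"
  shows "H \<ge> 1 \<and> (\<Sum>x\<in>A. w x * (log 2 (1 / w x) - H)^2) \<le> (m + log 2 (m + log 2 m + 1.1) - 1) * H^2"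
proof -
  define M where "M = 2*m + 2"
  define K where "K = m + log 2 (m + log 2 m + 1.1) - 1"
  have M6: "M \<ge> 6" using m2 by (simp add: M_def)
  have K1: "K \<ge> m + 1" using K_light_ge[OF m2] by (simp add: K_def)
  have H1: "H \<ge> 1"
  proof -
    have "(\<Sum>x\<in>A. w x) \<le> (\<Sum>x\<in>A. w x * log 2 (1 / w x))"
    proof (rule sum_mono)
      fix x assume x: "x \<in> A"
      show "w x \<le> w x * log 2 (1 / w x)"
      proof (cases "w x = 0")
        case False
        then have "w x > 0" using w0[OF x] by simp
        then have "log 2 (1 / w x) \<ge> 1" using w1[OF x] by (simp add: le_log_iff field_simps)
        then show ?thesis using \<open>w x > 0\<close> by simp
      qed simp
    qed
    then show ?thesis using s1 H by simp
  qed
  let ?c = "2 powr (-M) * (M * (M+1))"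
  have "(\<Sum>x\<in>A. w x * (log 2 (1 / w x))^2)
     \<le> (\<Sum>x\<in>A. (M+1) * (w x * log 2 (1 / w x)) - M * w x
            + (if log 2 (1 / w x) > M then ?c else 0))"
    using light_point[OF w0 w1 M6] by (intro sum_mono) (simp add: algebra_simps)
  also have "\<dots> = (M+1) * H - M + (\<Sum>x\<in>A. (if log 2 (1 / w x) > M then ?c else 0))"
    using s1 H by (simp add: sum.distrib sum_subtractf sum_distrib_left[symmetric])
  also have "(\<Sum>x\<in>A. (if log 2 (1 / w x) > M then ?c else 0)) \<le> 2 powr m * ?c"
    using M6 by (intro card_tail[OF fin card]) auto
  finally have E2: "(\<Sum>x\<in>A. w x * (log 2 (1 / w x))^2) \<le> (M+1) * H - M + 2 powr m * ?c" by simp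
  have tau: "2 powr m * ?c \<le> m + 1"
  proof -
    have "2 powr m * 2 powr (-M) = 1 / (4 * 2 powr m)"
      by (simp add: M_def powr_add[symmetric] powr_minus powr_add field_simps)
    then have eq: "2 powr m * ?c = (M * (M+1)) / (4 * 2 powr m)" by (simp add: mult.assoc[symmetric])
    have "M * (M+1) \<le> (m+1) * (4 * 2 powr m)"
    proof -
      have "M * (M+1) = (m+1) * (4*m + 6)" by (simp add: M_def algebra_simps)
      also have "\<dots> \<le> (m+1) * (4 * 2 powr m)"
        using pow_ge[OF m2] m2 by (intro mult_left_mono) auto
      finally show ?thesis .
    qed
    then show ?thesis unfolding eq by (simp add: divide_le_eq)
  qed
  have var: "(\<Sum>x\<in>A. w x * (log 2 (1 / w x) - H)^2) = (\<Sum>x\<in>A. w x * (log 2 (1 / w x))^2) - H^2"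
    by (rule var_expand[OF s1 H[symmetric]])
  have fin_ineq: "(M+1) * H - M + (m+1) - H^2 \<le> K * H^2"
  proof -
    have a: "(H - 1) * ((K+1) * (H+1) - (M+1)) \<ge> 0"
    proof -
      have "(K+1) * (H+1) \<ge> (m+2) * 2" using K1 H1 m2 by (intro mult_mono) auto
      then show ?thesis using H1 by (simp add: M_def)
    qed
    have "(K+1) * H^2 - (M+1) * H + M - (m+1) = (H - 1) * ((K+1) * (H+1) - (M+1)) + (K - (m+1))"
      by (simp add: power2_eq_square algebra_simps)
    then show ?thesis using a K1 by (simp add: algebra_simps)
  qed
  show ?thesis using H1 var E2 tau fin_ineq by (simp add: K_def)
qed

lemma heavy_var:
  fixes q :: "'a \<Rightarrow> real" and m c :: real
  assumes fin: "finite A" and card: "real (card A) \<le> 2 powr m" and m2: "m \<ge> 2"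
    and q0: "\<And>x. x \<in> A \<Longrightarrow> 0 \<le> q x" and s1: "(\<Sum>x\<in>A. q x) = 1"
    and c0: "0 < c" and c1: "c \<le> 1/2"
    and \<mu>: "\<mu> = (\<Sum>x\<in>A. q x * log 2 (1 / (c * q x)))"
  shows "\<mu> \<ge> 1 \<and> (\<Sum>x\<in>A. q x * (log 2 (1 / (c * q x)) - \<mu>)^2) \<le> (m + log 2 (m + log 2 m + 2.5)) * \<mu>^2"
proof -
  define M where "M = 2*m + 2"
  define K where "K = m + log 2 (m + log 2 m + 2.5)"
  define s where "s = log 2 (1 / c)"
  define h where "h = (\<Sum>x\<in>A. q x * log 2 (1 / q x))"
  have M6: "M \<ge> 6" using m2 by (simp add: M_def)
  have K2: "K \<ge> m + 2" using K_heavy_ge[OF m2] by (simp add: K_def)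
  have s1': "s \<ge> 1" unfolding s_def using c0 c1 by (simp add: le_log_iff field_simps)
  have q1: "\<And>x. x \<in> A \<Longrightarrow> q x \<le> 1"
  proof -
    fix x assume x: "x \<in> A"
    have "q x \<le> sum q A" by (rule member_le_sum[OF x]) (use q0 fin in auto)
    then show "q x \<le> 1" using s1 by simp
  qed
  have split: "\<And>x. x \<in> A \<Longrightarrow> q x * log 2 (1 / (c * q x)) = q x * s + q x * log 2 (1 / q x)"
  proof -
    fix x assume x: "x \<in> A"
    show "q x * log 2 (1 / (c * q x)) = q x * s + q x * log 2 (1 / q x)"
    proof (cases "q x = 0")
      case False
      then have "q x > 0" using q0[OF x] by simp
      then have "log 2 (1 / (c * q x)) = s + log 2 (1 / q x)"
        unfolding s_def using c0 by (simp add: log_divide log_mult)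
      then show ?thesis by (simp add: algebra_simps)
    qed simp
  qed
  have h0: "h \<ge> 0" unfolding h_def
  proof (intro sum_nonneg)
    fix x assume x: "x \<in> A"
    show "0 \<le> q x * log 2 (1 / q x)"
    proof (cases "q x = 0")
      case False
      then have "q x > 0" using q0[OF x] by simp
      then have "log 2 (1 / q x) \<ge> 0" using q1[OF x] by simp
      then show ?thesis using \<open>q x > 0\<close> by simp
    qed simp
  qed
  have \<mu>sh: "\<mu> = s + h"
    using s1 by (simp add: \<mu> split sum.distrib h_def sum_distrib_right[symmetric])
  have "(\<Sum>x\<in>A. q x * (log 2 (1 / (c * q x)) - \<mu>)^2) = (\<Sum>x\<in>A. q x * (log 2 (1 / q x) - h)^2)"
  proof (intro sum.cong refl)
    fix x assume x: "x \<in> A"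
    show "q x * (log 2 (1 / (c * q x)) - \<mu>)^2 = q x * (log 2 (1 / q x) - h)^2"
    proof (cases "q x = 0")
      case False
      then have "q x > 0" using q0[OF x] by simp
      then have "log 2 (1 / (c * q x)) = s + log 2 (1 / q x)"
        unfolding s_def using c0 by (simp add: log_divide log_mult)
      then show ?thesis using \<mu>sh by simp
    qed simp
  qed
  also have "\<dots> = (\<Sum>x\<in>A. q x * (log 2 (1 / q x))^2) - h^2"
    by (rule var_expand[OF s1 h_def[symmetric]])
  finally have var: "(\<Sum>x\<in>A. q x * (log 2 (1 / (c * q x)) - \<mu>)^2) = (\<Sum>x\<in>A. q x * (log 2 (1 / q x))^2) - h^2" .
  let ?c = "2 powr (-M) * M^2"
  have "(\<Sum>x\<in>A. q x * (log 2 (1 / q x))^2)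
     \<le> (\<Sum>x\<in>A. M * (q x * log 2 (1 / q x)) + (if log 2 (1 / q x) > M then ?c else 0))"
    using heavy_point[OF q0 q1 M6] by (intro sum_mono) simp
  also have "\<dots> = M * h + (\<Sum>x\<in>A. (if log 2 (1 / q x) > M then ?c else 0))"
    by (simp add: sum.distrib h_def sum_distrib_left)
  also have "(\<Sum>x\<in>A. (if log 2 (1 / q x) > M then ?c else 0)) \<le> 2 powr m * ?c"
    by (intro card_tail[OF fin card]) auto
  finally have E2: "(\<Sum>x\<in>A. q x * (log 2 (1 / q x))^2) \<le> M * h + 2 powr m * ?c" by simp
  have tau: "2 powr m * ?c \<le> m + 1"
  proof -
    have "2 powr m * 2 powr (-M) = 1 / (4 * 2 powr m)"
      by (simp add: M_def powr_add[symmetric] powr_minus powr_add field_simps)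
    then have eq: "2 powr m * ?c = M^2 / (4 * 2 powr m)" by (simp add: mult.assoc[symmetric])
    have "M^2 \<le> (m+1) * (4 * 2 powr m)"
    proof -
      have "M^2 = (m+1) * (4*m + 4)" by (simp add: M_def algebra_simps power2_eq_square)
      also have "\<dots> \<le> (m+1) * (4 * 2 powr m)"
        using pow_ge[OF m2] m2 by (intro mult_left_mono) auto
      finally show ?thesis .
    qed
    then show ?thesis unfolding eq by (simp add: divide_le_eq)
  qed
  have fin_ineq: "M * h + (m+1) - h^2 \<le> K * (s + h)^2"
  proof -
    have "(1 + h)^2 \<le> (s + h)^2" using s1' h0 by (intro power_mono) auto
    then have a: "K * (1 + h)^2 \<le> K * (s + h)^2" using K2 m2 by (intro mult_left_mono) auto
    have b: "M * h \<le> 2 * K * h" using K2 h0 by (intro mult_right_mono) (auto simp: M_def)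
    have c: "0 \<le> (K + 1) * h^2" using K2 m2 by simp
    have "K * (1 + h)^2 = K + 2 * K * h + K * h^2" by (simp add: power2_eq_square algebra_simps)
    then show ?thesis using a b c K2 by (simp add: algebra_simps)
  qed
  have "\<mu> \<ge> 1" using \<mu>sh s1' h0 by simp
  then show ?thesis using var E2 tau fin_ineq \<mu>sh by (simp add: K_def)
qed



lemma prob_bind_fin:
  assumes "finite (set_pmf p)"
  shows "measure_pmf.prob (bind_pmf p f) B = (\<Sum>x\<in>set_pmf p. pmf p x * measure_pmf.prob (f x) B)"
proof -
  have "ennreal (measure_pmf.prob (bind_pmf p f) B) = emeasure (bind_pmf p f) B"
    by (simp add: measure_pmf.emeasure_eq_measure)
  also have "\<dots> = (\<integral>\<^sup>+x. emeasure (f x) B \<partial>p)" by simp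
  also have "\<dots> = (\<Sum>x\<in>set_pmf p. emeasure (f x) B * pmf p x)"
    by (rule nn_integral_measure_pmf_finite) (use assms in auto)
  also have "\<dots> = ennreal (\<Sum>x\<in>set_pmf p. pmf p x * measure_pmf.prob (f x) B)"
    by (subst sum_ennreal[symmetric]) (auto simp: measure_pmf.emeasure_eq_measure ennreal_mult' mult.commute)
  finally show ?thesis
    by (subst (asm) ennreal_inj) (auto intro!: sum_nonneg)
qed

lemma set_iid: "set_pmf (iid_pmf n p) \<subseteq> {xs. length xs = n \<and> set xs \<subseteq> set_pmf p}"
  by (induction n) (auto, blast)

lemma finite_iid:
  assumes "finite (set_pmf p)" shows "finite (set_pmf (iid_pmf n p))"
  by (induction n) (use assms in auto)

lemma prob_iid_Suc:
  assumes "finite (set_pmf p)"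
  shows "measure_pmf.prob (iid_pmf (Suc n) p) A =
     (\<Sum>x\<in>set_pmf p. pmf p x * measure_pmf.prob (iid_pmf n p) {xs. x # xs \<in> A})"
  by (simp add: prob_bind_fin[OF assms] vimage_def)

lemma exp_iid_Suc:
  fixes g :: "'b list \<Rightarrow> real"
  assumes "finite (set_pmf p)"
  shows "measure_pmf.expectation (iid_pmf (Suc n) p) g =
     (\<Sum>x\<in>set_pmf p. pmf p x * measure_pmf.expectation (iid_pmf n p) (\<lambda>xs. g (x # xs)))"
  by (simp add: pmf_expectation_bind[where A="set_pmf p"] assms finite_iid)

lemma exp_fin:
  fixes f :: "'b \<Rightarrow> real"
  assumes "finite (set_pmf p)"
  shows "measure_pmf.expectation p f = (\<Sum>x\<in>set_pmf p. pmf p x * f x)"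
  by (subst integral_measure_pmf_real[where A="set_pmf p"]) (use assms in \<open>auto simp: mult.commute\<close>)

lemma sum_pmf_fin: "finite (set_pmf p) \<Longrightarrow> (\<Sum>x\<in>set_pmf p. pmf p x) = 1"
  using sum_pmf_eq_1[of "set_pmf p" p] by auto

lemma iid_sum_mean:
  fixes h :: "'b \<Rightarrow> real"
  assumes fin: "finite (set_pmf p)"
  shows "measure_pmf.expectation (iid_pmf n p) (\<lambda>ys. \<Sum>y\<leftarrow>ys. h y) = n * measure_pmf.expectation p h"
proof (induction n)
  case 0 then show ?case by simp
next
  case (Suc n)
  have "measure_pmf.expectation (iid_pmf (Suc n) p) (\<lambda>ys. \<Sum>y\<leftarrow>ys. h y)
      = (\<Sum>x\<in>set_pmf p. pmf p x * measure_pmf.expectation (iid_pmf n p) (\<lambda>ys. h x + (\<Sum>y\<leftarrow>ys. h y)))"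
    by (subst exp_iid_Suc[OF fin]) simp
  also have "\<dots> = (\<Sum>x\<in>set_pmf p. pmf p x * (h x + n * measure_pmf.expectation p h))"
    by (intro sum.cong refl)
       (simp add: integral_add integrable_measure_pmf_finite finite_iid fin Suc)
  also have "\<dots> = (\<Sum>x\<in>set_pmf p. pmf p x * h x) + n * measure_pmf.expectation p h * (\<Sum>x\<in>set_pmf p. pmf p x)"
    by (simp add: algebra_simps sum.distrib sum_distrib_left sum_distrib_right)
  also have "\<dots> = Suc n * measure_pmf.expectation p h"
    by (simp add: sum_pmf_fin fin exp_fin[OF fin] algebra_simps)
  finally show ?case .
qed

lemma iid_sum_var:
  fixes h :: "'b \<Rightarrow> real"
  assumes fin: "finite (set_pmf p)"
  defines "\<mu> \<equiv> measure_pmf.expectation p h"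
  shows "measure_pmf.expectation (iid_pmf n p) (\<lambda>ys. ((\<Sum>y\<leftarrow>ys. h y) - n * \<mu>)\<^sup>2)
       = n * measure_pmf.expectation p (\<lambda>y. (h y - \<mu>)\<^sup>2)"
proof (induction n)
  case 0 then show ?case by simp
next
  case (Suc n)
  let ?S = "\<lambda>ys. \<Sum>y\<leftarrow>ys. h y"
  have int: "\<And>f::'b list \<Rightarrow> real. integrable (measure_pmf (iid_pmf n p)) f"
    by (simp add: integrable_measure_pmf_finite finite_iid fin)
  have ES: "measure_pmf.expectation (iid_pmf n p) ?S = n * \<mu>"
    using iid_sum_mean[OF fin] \<mu>_def by simp
  have step: "measure_pmf.expectation (iid_pmf n p) (\<lambda>ys. (h x + ?S ys - real (Suc n) * \<mu>)\<^sup>2)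
        = (h x - \<mu>)\<^sup>2 + n * measure_pmf.expectation p (\<lambda>y. (h y - \<mu>)\<^sup>2)" for x
  proof -
    have eq: "(\<lambda>ys. (h x + ?S ys - real (Suc n) * \<mu>)\<^sup>2) =
      (\<lambda>ys. (h x - \<mu>)\<^sup>2 + 2 * (h x - \<mu>) * (?S ys - n * \<mu>) + (?S ys - n * \<mu>)\<^sup>2)"
      by (rule ext) (simp add: power2_eq_square algebra_simps)
    have "measure_pmf.expectation (iid_pmf n p) (\<lambda>ys. (h x - \<mu>)\<^sup>2 + 2 * (h x - \<mu>) * (?S ys - n * \<mu>) + (?S ys - n * \<mu>)\<^sup>2)
       = (h x - \<mu>)\<^sup>2 + 2 * (h x - \<mu>) * (measure_pmf.expectation (iid_pmf n p) ?S - n * \<mu>)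
         + measure_pmf.expectation (iid_pmf n p) (\<lambda>ys. (?S ys - n * \<mu>)\<^sup>2)"
      by (simp add: integral_add integral_diff int)
    then show ?thesis using eq ES Suc by simp
  qed
  have "measure_pmf.expectation (iid_pmf (Suc n) p) (\<lambda>ys. (?S ys - real (Suc n) * \<mu>)\<^sup>2)
      = (\<Sum>x\<in>set_pmf p. pmf p x * measure_pmf.expectation (iid_pmf n p) (\<lambda>ys. (h x + ?S ys - real (Suc n) * \<mu>)\<^sup>2))"
    by (subst exp_iid_Suc[OF fin]) simp
  also have "\<dots> = (\<Sum>x\<in>set_pmf p. pmf p x * ((h x - \<mu>)\<^sup>2 + n * measure_pmf.expectation p (\<lambda>y. (h y - \<mu>)\<^sup>2)))"
    using step by (intro sum.cong refl) (simp del: of_nat_Suc)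
  also have "\<dots> = (\<Sum>x\<in>set_pmf p. pmf p x * (h x - \<mu>)\<^sup>2) + n * measure_pmf.expectation p (\<lambda>y. (h y - \<mu>)\<^sup>2) * (\<Sum>x\<in>set_pmf p. pmf p x)"
    by (simp add: algebra_simps sum.distrib sum_distrib_left sum_distrib_right)
  also have "\<dots> = Suc n * measure_pmf.expectation p (\<lambda>y. (h y - \<mu>)\<^sup>2)"
    by (simp add: sum_pmf_fin fin exp_fin[OF fin] algebra_simps)
  finally show ?case .
qed

lemma round_fail:
  fixes h :: "'b \<Rightarrow> real"
  assumes fin: "finite (set_pmf p)" and t: "t > 0" and \<epsilon>: "\<epsilon> > 0"
    and \<mu>: "\<mu> = measure_pmf.expectation p h" and \<mu>pos: "\<mu> > 0"
  shows "measure_pmf.prob (map_pmf (\<lambda>ys. (\<Sum>y\<leftarrow>ys. h y) / real t) (iid_pmf t p))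
           {c. \<not> ((1 - \<epsilon>) * \<mu> \<le> c \<and> c \<le> (1 + \<epsilon>) * \<mu>)}
         \<le> measure_pmf.expectation p (\<lambda>y. (h y - \<mu>)\<^sup>2) / (real t * \<epsilon>\<^sup>2 * \<mu>\<^sup>2)"
proof -
  let ?S = "\<lambda>ys. \<Sum>y\<leftarrow>ys. h y"
  let ?V = "measure_pmf.expectation p (\<lambda>y. (h y - \<mu>)\<^sup>2)"
  let ?M = "measure_pmf (iid_pmf t p)"
  have sub: "(\<lambda>ys. ?S ys / real t) -` {c. \<not> ((1 - \<epsilon>) * \<mu> \<le> c \<and> c \<le> (1 + \<epsilon>) * \<mu>)}
      \<subseteq> {ys \<in> space ?M. (real t * \<epsilon> * \<mu>)\<^sup>2 \<le> (?S ys - real t * \<mu>)\<^sup>2}"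
  proof
    fix ys assume "ys \<in> (\<lambda>ys. ?S ys / real t) -` {c. \<not> ((1 - \<epsilon>) * \<mu> \<le> c \<and> c \<le> (1 + \<epsilon>) * \<mu>)}"
    then have "?S ys < (1 - \<epsilon>) * \<mu> * t \<or> ?S ys > (1 + \<epsilon>) * \<mu> * t"
      using t by (auto simp: field_simps)
    then have "real t * \<epsilon> * \<mu> \<le> \<bar>?S ys - real t * \<mu>\<bar>"
      by (auto simp: algebra_simps)
    then have "(real t * \<epsilon> * \<mu>)\<^sup>2 \<le> (?S ys - real t * \<mu>)\<^sup>2"
      using t \<epsilon> \<mu>pos by (metis abs_le_square_iff abs_of_nonneg less_imp_le mult_nonneg_nonneg of_nat_0_le_iff)
    then show "ys \<in> {ys \<in> space ?M. (real t * \<epsilon> * \<mu>)\<^sup>2 \<le> (?S ys - real t * \<mu>)\<^sup>2}" by simp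
  qed
  have "measure_pmf.prob (map_pmf (\<lambda>ys. ?S ys / real t) (iid_pmf t p))
           {c. \<not> ((1 - \<epsilon>) * \<mu> \<le> c \<and> c \<le> (1 + \<epsilon>) * \<mu>)}
     \<le> measure ?M {ys \<in> space ?M. (real t * \<epsilon> * \<mu>)\<^sup>2 \<le> (?S ys - real t * \<mu>)\<^sup>2}"
    unfolding measure_map_pmf by (rule measure_pmf.finite_measure_mono[OF sub]) simp
  also have "\<dots> \<le> measure_pmf.expectation (iid_pmf t p) (\<lambda>ys. (?S ys - real t * \<mu>)\<^sup>2) / (real t * \<epsilon> * \<mu>)\<^sup>2"
    by (rule integral_Markov_inequality_measure[where A="{}"])
       (use t \<epsilon> \<mu>pos in \<open>auto simp: integrable_measure_pmf_finite finite_iid fin\<close>)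
  also have "\<dots> = real t * ?V / (real t * \<epsilon> * \<mu>)\<^sup>2"
    using iid_sum_var[OF fin, where h=h and n=t] \<mu> by simp
  also have "\<dots> = ?V / (real t * \<epsilon>\<^sup>2 * \<mu>\<^sup>2)"
    using t by (simp add: power2_eq_square field_simps)
  finally show ?thesis .
qed

lemma prob_fin_sum:
  assumes "finite (set_pmf Z)"
  shows "measure_pmf.prob Z {z. B z} = (\<Sum>x\<in>set_pmf Z. pmf Z x * (if B x then 1 else 0))"
proof -
  have "measure_pmf.prob Z {z. B z} = measure_pmf.prob Z (set_pmf Z \<inter> {z. B z})"
    using measure_Int_set_pmf[of Z "{z. B z}"] by (simp add: Int_commute)
  also have "\<dots> = sum (pmf Z) (set_pmf Z \<inter> {z. B z})"
    using assms by (simp add: measure_measure_pmf_finite)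
  also have "\<dots> = (\<Sum>x\<in>set_pmf Z. pmf Z x * (if B x then 1 else 0))"
    using assms by (simp add: sum.inter_restrict if_distrib cong: if_cong)
  finally show ?thesis .
qed

lemma count_bad:
  fixes Z :: "'b pmf" and p :: real
  assumes fin: "finite (set_pmf Z)" and pB: "measure_pmf.prob Z {z. B z} \<le> p" and p0: "0 \<le> p"
  shows "measure_pmf.prob (iid_pmf T Z) {xs. k \<le> length (filter B xs)} \<le> (T choose k) * p^k"
proof (induction T arbitrary: k)
  case 0
  then show ?case by (cases k) auto
next
  case (Suc T)
  show ?case
  proof (cases k)
    case 0 then show ?thesis by simp
  next
    case (Suc k')
    let ?a = "(T choose k') * p^k'" and ?b = "(T choose Suc k') * p^Suc k'"
    have ab: "0 \<le> ?a" "0 \<le> ?b" using p0 by auto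
    have "measure_pmf.prob (iid_pmf (Suc T) Z) {xs. k \<le> length (filter B xs)}
       = (\<Sum>x\<in>set_pmf Z. pmf Z x * measure_pmf.prob (iid_pmf T Z) {xs. k \<le> length (filter B (x # xs))})"
      by (subst prob_iid_Suc[OF fin]) simp
    also have "\<dots> \<le> (\<Sum>x\<in>set_pmf Z. pmf Z x * ((if B x then 1 else 0) * ?a + ?b))"
    proof (intro sum_mono mult_left_mono)
      fix x
      show "measure_pmf.prob (iid_pmf T Z) {xs. k \<le> length (filter B (x # xs))} \<le> (if B x then 1 else 0) * ?a + ?b"
      proof (cases "B x")
        case True
        then show ?thesis using Suc.IH[of k'] \<open>k = Suc k'\<close> ab by simp
      next
        case False
        then show ?thesis using Suc.IH[of "Suc k'"] \<open>k = Suc k'\<close> by simp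
      qed
    qed simp
    also have "\<dots> = measure_pmf.prob Z {z. B z} * ?a + ?b * (\<Sum>x\<in>set_pmf Z. pmf Z x)"
      by (simp add: prob_fin_sum[OF fin] algebra_simps sum.distrib sum_distrib_left sum_distrib_right)
    also have "\<dots> \<le> p * ?a + ?b"
      using pB ab by (simp add: sum_pmf_fin fin mult_right_mono)
    also have "\<dots> = (Suc T choose k) * p^k"
      using \<open>k = Suc k'\<close> by (simp add: algebra_simps)
    finally show ?thesis .
  qed
qed

lemma filter_sort_len: "length (filter P (sort xs)) = length (filter P (xs::real list))"
  by (metis mset_filter mset_sort size_mset)

lemma median_bad:
  fixes xs :: "real list"
  assumes len: "length xs = T" and T: "T \<ge> 1" and nb: "\<not> (a \<le> median xs \<and> median xs \<le> b)"
  shows "(T+1) div 2 \<le> length (filter (\<lambda>z. \<not> (a \<le> z \<and> z \<le> b)) xs)"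
proof -
  let ?P = "\<lambda>z. \<not> (a \<le> z \<and> z \<le> b)"
  define s where "s = sort xs"
  define j where "j = (T - 1) div 2"
  have ls: "length s = T" using len by (simp add: s_def)
  have srt: "sorted s" by (simp add: s_def)
  have jT: "j < T" using T by (simp add: j_def)
  have med: "median xs = s ! j" using len by (simp add: median_def s_def j_def)
  have cnt: "length (filter ?P xs) = card {i. i < T \<and> ?P (s ! i)}"
    using filter_sort_len[of ?P xs] length_filter_conv_card[of ?P s] ls by (simp add: s_def)
  have fin: "finite {i. i < T \<and> ?P (s ! i)}" by simp
  show ?thesis
  proof (cases "s ! j < a")
    case True
    have "{0..j} \<subseteq> {i. i < T \<and> ?P (s ! i)}"
    proof
      fix i assume "i \<in> {0..j}"
      then have "i \<le> j" by simp
      then have "s ! i \<le> s ! j" using srt jT ls by (simp add: sorted_nth_mono)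
      then show "i \<in> {i. i < T \<and> ?P (s ! i)}" using True \<open>i \<le> j\<close> jT by auto
    qed
    then have "card {0..j} \<le> card {i. i < T \<and> ?P (s ! i)}" by (rule card_mono[OF fin])
    moreover have "(T+1) div 2 = card {0..j}" using T by (simp add: j_def)
    ultimately show ?thesis using cnt by simp
  next
    case False
    then have "s ! j > b" using nb med by auto
    have "{j..<T} \<subseteq> {i. i < T \<and> ?P (s ! i)}"
    proof
      fix i assume "i \<in> {j..<T}"
      then have "j \<le> i" "i < T" by auto
      then have "s ! j \<le> s ! i" using srt ls by (simp add: sorted_nth_mono)
      then show "i \<in> {i. i < T \<and> ?P (s ! i)}" using \<open>s ! j > b\<close> \<open>i < T\<close> by auto
    qed
    then have "card {j..<T} \<le> card {i. i < T \<and> ?P (s ! i)}" by (rule card_mono[OF fin])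
    moreover have "(T+1) div 2 \<le> card {j..<T}" using T by (simp add: j_def)
    ultimately show ?thesis using cnt by simp
  qed
qed

lemma median_est:
  fixes Z :: "real pmf"
  assumes fin: "finite (set_pmf Z)" and T: "T \<ge> 1"
    and pb: "measure_pmf.prob Z {z. \<not> (a \<le> z \<and> z \<le> b)} \<le> 1/6"
  shows "measure_pmf.prob (map_pmf median (iid_pmf T Z)) {z. a \<le> z \<and> z \<le> b} \<ge> 1 - (2/3)^((T+1) div 2)"
proof -
  let ?k = "(T+1) div 2"
  let ?P = "\<lambda>z. \<not> (a \<le> z \<and> z \<le> b)"
  have sub: "median -` {z. ?P z} \<inter> set_pmf (iid_pmf T Z) \<subseteq> {xs. ?k \<le> length (filter ?P xs)}"
  proof
    fix xs assume "xs \<in> median -` {z. ?P z} \<inter> set_pmf (iid_pmf T Z)"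
    then have "length xs = T" "?P (median xs)" using set_iid by auto
    then show "xs \<in> {xs. ?k \<le> length (filter ?P xs)}" using median_bad[of xs T a b] T by auto
  qed
  have "measure_pmf.prob (map_pmf median (iid_pmf T Z)) {z. ?P z}
      = measure_pmf.prob (iid_pmf T Z) (median -` {z. ?P z} \<inter> set_pmf (iid_pmf T Z))"
    by (simp add: measure_Int_set_pmf)
  also have "\<dots> \<le> measure_pmf.prob (iid_pmf T Z) {xs. ?k \<le> length (filter ?P xs)}"
    by (rule measure_pmf.finite_measure_mono[OF sub]) simp
  also have "\<dots> \<le> (T choose ?k) * (1/6)^?k"
    by (rule count_bad[OF fin pb]) simp
  also have "\<dots> \<le> 2^T * (1/6::real)^?k"
    by (intro mult_right_mono) (use binomial_le_pow2[of T ?k] in \<open>simp_all add: of_nat_le_iff[symmetric]\<close>)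
  also have "\<dots> \<le> 4^?k * (1/6::real)^?k"
  proof (intro mult_right_mono)
    have "(2::real)^T \<le> 2^(2*?k)" by (intro power_increasing) auto
    then show "(2::real)^T \<le> 4^?k" by (simp add: power_mult)
  qed simp
  also have "\<dots> = (2/3)^?k" by (simp add: power_mult_distrib[symmetric])
  finally have bad: "measure_pmf.prob (map_pmf median (iid_pmf T Z)) {z. ?P z} \<le> (2/3)^?k" .
  have "measure_pmf.prob (map_pmf median (iid_pmf T Z)) {z. a \<le> z \<and> z \<le> b}
     = 1 - measure_pmf.prob (map_pmf median (iid_pmf T Z)) {z. ?P z}"
    using measure_pmf.prob_compl[of "{z. a \<le> z \<and> z \<le> b}" "map_pmf median (iid_pmf T Z)"]
    by (simp add: Compl_eq[symmetric] set_diff_eq)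
  then show ?thesis using bad by simp
qed

lemma T_bound:
  assumes "0 < d" "d < 1"
  shows "SampleEst_T d \<ge> 1 \<and> (2/3::real)^((SampleEst_T d + 1) div 2) \<le> d"
proof -
  define L where "L = log 2 (2 / d)"
  have L1: "L > 1" using assms by (simp add: L_def less_log_iff field_simps)
  have TL: "real (SampleEst_T d) \<ge> 9/2 * L"
    unfolding SampleEst_T_def L_def by linarith
  then have T1: "SampleEst_T d \<ge> 1" using L1 by linarith
  define k where "k = (SampleEst_T d + 1) div 2"
  have kL: "real k \<ge> 2 * L"
  proof -
    have "2 * k \<ge> SampleEst_T d" unfolding k_def by simp
    then have "2 * real k \<ge> real (SampleEst_T d)" by linarith
    then show ?thesis using TL L1 by linarith
  qed
  have "(3/2::real)^k = (3/2) powr real k" by (simp add: powr_realpow)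
  also have "\<dots> \<ge> (3/2) powr (2 * L)" by (intro powr_mono kL) auto
  finally have a: "(3/2::real)^k \<ge> (3/2) powr (2 * L)" .
  have "(3/2::real) powr (2 * L) = ((3/2) powr 2) powr L" by (subst powr_powr) simp
  also have "\<dots> = (9/4) powr L" by (simp add: powr_numeral power2_eq_square)
  also have "\<dots> \<ge> 2 powr L" by (intro powr_mono2) (use L1 in auto)
  also have "2 powr L = 2 / d" unfolding L_def using assms by simp
  finally have "(3/2::real)^k \<ge> 2 / d" using a by linarith
  then have "(3/2::real)^k \<ge> 1 / d" using assms by (smt (verit) divide_right_mono)
  then have "(2/3::real)^k \<le> d"
    using assms by (simp add: power_divide field_simps)
  then show ?thesis using T1 k_def by simp
qed

lemma finite_PROC: "finite (set_pmf D) \<Longrightarrow> set_pmf D \<inter> S \<noteq> {} \<Longrightarrow> finite (set_pmf (PROC D S))"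
  unfolding PROC_def by (simp add: set_cond_pmf)

lemma SampleEst_good:
  fixes D :: "'a pmf"
  assumes finD: "finite (set_pmf D)" and ne: "set_pmf D \<inter> (\<Omega> - Sbar) \<noteq> {}" and t: "t > 0" and \<epsilon>: "\<epsilon> > 0" and d: "0 < d" "d < 1"
    and \<mu>: "\<mu> = measure_pmf.expectation (PROC D (\<Omega> - Sbar)) (\<lambda>y. log 2 (1 / snd y))"
    and \<mu>pos: "\<mu> > 0"
    and V: "measure_pmf.expectation (PROC D (\<Omega> - Sbar)) (\<lambda>y. (log 2 (1 / snd y) - \<mu>)\<^sup>2)
              \<le> real t * \<epsilon>\<^sup>2 * \<mu>\<^sup>2 / 6"
  shows "measure_pmf.prob (SampleEst D \<Omega> Sbar t d) {z. (1 - \<epsilon>) * \<mu> \<le> z \<and> z \<le> (1 + \<epsilon>) * \<mu>} \<ge> 1 - d"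
proof -
  let ?P = "PROC D (\<Omega> - Sbar)"
  let ?V = "measure_pmf.expectation ?P (\<lambda>y. (log 2 (1 / snd y) - \<mu>)\<^sup>2)"
  have finP: "finite (set_pmf ?P)" by (rule finite_PROC[OF finD ne])
  have finZ: "finite (set_pmf (SampleEst_round D \<Omega> Sbar t))"
    unfolding SampleEst_round_def using finite_iid[OF finP] by simp
  have "measure_pmf.prob (SampleEst_round D \<Omega> Sbar t) {c. \<not> ((1 - \<epsilon>) * \<mu> \<le> c \<and> c \<le> (1 + \<epsilon>) * \<mu>)}
      \<le> ?V / (real t * \<epsilon>\<^sup>2 * \<mu>\<^sup>2)"
    unfolding SampleEst_round_def by (rule round_fail[OF finP t \<epsilon> \<mu> \<mu>pos])
  also have "\<dots> \<le> 1/6"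
    using V t \<epsilon> \<mu>pos by (simp add: divide_le_eq)
  finally have pb: "measure_pmf.prob (SampleEst_round D \<Omega> Sbar t) {c. \<not> ((1 - \<epsilon>) * \<mu> \<le> c \<and> c \<le> (1 + \<epsilon>) * \<mu>)} \<le> 1/6" .
  have Tb: "SampleEst_T d \<ge> 1" "(2/3::real)^((SampleEst_T d + 1) div 2) \<le> d"
    using T_bound[OF d] by auto
  show ?thesis
    unfolding SampleEst_def
    using median_est[OF finZ Tb(1) pb] Tb(2) by linarith
qed



lemma exp_PROC:
  fixes g :: "real \<Rightarrow> real"
  assumes fin: "finite S" and ne: "set_pmf D \<inter> S \<noteq> {}"
  shows "measure_pmf.expectation (PROC D S) (\<lambda>y. g (snd y))
       = (\<Sum>x\<in>S. (pmf D x / measure_pmf.prob D S) * g (pmf D x))"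
proof -
  have "measure_pmf.expectation (PROC D S) (\<lambda>y. g (snd y))
      = measure_pmf.expectation (cond_pmf D S) (\<lambda>x. g (pmf D x))"
    unfolding PROC_def by simp
  also have "\<dots> = (\<Sum>x\<in>S. g (pmf D x) * pmf (cond_pmf D S) x)"
    by (rule integral_measure_pmf_real[OF fin]) (use ne in \<open>auto simp: set_cond_pmf\<close>)
  also have "\<dots> = (\<Sum>x\<in>S. (pmf D x / measure_pmf.prob D S) * g (pmf D x))"
    by (intro sum.cong refl) (use ne in \<open>simp add: pmf_cond\<close>)
  finally show ?thesis .
qed

lemma prob_fin_set: "finite S \<Longrightarrow> measure_pmf.prob D S = (\<Sum>x\<in>S. pmf D x)"
  by (simp add: measure_measure_pmf_finite)

lemma t_ge:
  assumes "\<epsilon> > 0" "K \<ge> 0" 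
  shows "real (nat \<lceil>6 / \<epsilon>\<^sup>2 * K\<rceil>) * \<epsilon>\<^sup>2 / 6 \<ge> K"
proof -
  have "real (nat \<lceil>6 / \<epsilon>\<^sup>2 * K\<rceil>) \<ge> 6 / \<epsilon>\<^sup>2 * K" by linarith
  then have "real (nat \<lceil>6 / \<epsilon>\<^sup>2 * K\<rceil>) * \<epsilon>\<^sup>2 \<ge> 6 / \<epsilon>\<^sup>2 * K * \<epsilon>\<^sup>2"
    using assms by (intro mult_right_mono) auto
  then show ?thesis using assms by (simp add: field_simps)
qed

lemma t_pos:
  assumes "\<epsilon> > 0" "K > 0" shows "nat \<lceil>6 / \<epsilon>\<^sup>2 * K\<rceil> > 0"
  using assms by simp

context
  fixes D :: "'a pmf" and \<Omega> :: "'a set" and \<epsilon> \<delta> :: real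
  assumes fin: "finite \<Omega>"
    and sub: "set_pmf D \<subseteq> \<Omega>"
    and m2: "log 2 (real (card \<Omega>)) \<ge> 2"
    and \<epsilon>: "\<epsilon> > 0" and \<delta>0: "0 < \<delta>" and \<delta>1: "\<delta> < 1"
begin

definition "m = log 2 (real (card \<Omega>))"
definition "H = shannon_entropy D \<Omega>"

lemma m2': "m \<ge> 2" using m2 by (simp add: m_def)

lemma card_pos: "card \<Omega> > 0"
  using m2 by (cases "card \<Omega> = 0") (auto simp: log_def)

lemma card_eq: "real (card \<Omega>) = 2 powr m"
  using card_pos by (simp add: m_def)

lemma finD: "finite (set_pmf D)" using fin sub by (rule finite_subset[rotated])

lemma sum1: "(\<Sum>x\<in>\<Omega>. pmf D x) = 1"
  using sum_pmf_eq_1[OF fin sub] .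

lemma H_def': "H = (\<Sum>x\<in>\<Omega>. pmf D x * log 2 (1 / pmf D x))"
  by (simp add: H_def shannon_entropy_def)

abbreviation "G \<equiv> {h. (1 - \<epsilon>) * H \<le> h \<and> h \<le> (1 + \<epsilon>) * H}"

lemma light_case:
  assumes light: "\<And>x. pmf D x \<le> 1/2"
  shows "measure_pmf.prob (EE_loop D \<Omega> \<epsilon> \<delta> 0) G \<ge> 1 - 0.9 * \<delta>"
proof -
  have ne: "set_pmf D \<inter> (\<Omega> - {}) \<noteq> {}" using sub set_pmf_not_empty[of D] by auto
  have pO: "measure_pmf.prob D \<Omega> = 1" using prob_fin_set[OF fin] sum1 by simp
  have lv: "H \<ge> 1 \<and> (\<Sum>x\<in>\<Omega>. pmf D x * (log 2 (1 / pmf D x) - H)^2)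
             \<le> (m + log 2 (m + log 2 m + 1.1) - 1) * H^2"
    by (rule light_var[OF fin _ m2']) (use card_eq light sum1 H_def' in auto)
  let ?K = "m + log 2 (m + log 2 m + 1.1) - 1"
  let ?t = "t_light m \<epsilon>"
  have K: "?K \<ge> m + 1" using K_light_ge[OF m2'] .
  have tK: "real ?t * \<epsilon>\<^sup>2 / 6 \<ge> ?K" unfolding t_light_def using t_ge[OF \<epsilon>, of ?K] K m2' by simp
  have tp: "?t > 0" unfolding t_light_def using t_pos[OF \<epsilon>, of ?K] K m2' by simp
  have \<mu>: "H = measure_pmf.expectation (PROC D (\<Omega> - {})) (\<lambda>y. log 2 (1 / snd y))"
    using exp_PROC[OF fin, of D "\<lambda>r. log 2 (1/r)"] ne pO H_def' by simp
  have V: "measure_pmf.expectation (PROC D (\<Omega> - {})) (\<lambda>y. (log 2 (1 / snd y) - H)\<^sup>2)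
              \<le> real ?t * \<epsilon>\<^sup>2 * H\<^sup>2 / 6"
  proof -
    have "measure_pmf.expectation (PROC D (\<Omega> - {})) (\<lambda>y. (log 2 (1 / snd y) - H)\<^sup>2)
        = (\<Sum>x\<in>\<Omega>. pmf D x * (log 2 (1 / pmf D x) - H)^2)"
      using exp_PROC[OF fin, of D "\<lambda>r. (log 2 (1/r) - H)^2"] ne pO by simp
    also have "\<dots> \<le> ?K * H^2" using lv by simp
    also have "\<dots> \<le> (real ?t * \<epsilon>\<^sup>2 / 6) * H^2" using tK by (intro mult_right_mono) auto
    finally show ?thesis by simp
  qed
  have "measure_pmf.prob (SampleEst D \<Omega> {} ?t (0.9 * \<delta>)) {z. (1 - \<epsilon>) * H \<le> z \<and> z \<le> (1 + \<epsilon>) * H} \<ge> 1 - 0.9 * \<delta>"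
    by (rule SampleEst_good[OF finD ne tp \<epsilon> _ _ \<mu> _ V]) (use \<delta>0 \<delta>1 lv in auto)
  then show ?thesis by (simp add: m_def)
qed

definition branch :: "'a \<Rightarrow> real \<Rightarrow> real pmf" where
  "branch x r = (if r = 1 then return_pmf 0
          else map_pmf (\<lambda>h. (1 - r) * h + r * log 2 (1 / r))
                 (SampleEst D \<Omega> {x} (t_heavy (log 2 (card \<Omega>)) \<epsilon>) (0.9 * \<delta>)))"

lemma heavy_branch:
  assumes hv: "pmf D x0 > 1/2"
  shows "measure_pmf.prob (branch x0 (pmf D x0)) G \<ge> 1 - 0.9 * \<delta>"
proof -
  let ?r = "pmf D x0"
  have x0: "x0 \<in> \<Omega>" using hv sub by (auto simp: set_pmf_iff)
  have sumS: "(\<Sum>x\<in>\<Omega> - {x0}. pmf D x) = 1 - ?r"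
    using sum1 sum_diff1[of \<Omega> "pmf D" x0] fin x0 by simp
  have Hsplit: "H = ?r * log 2 (1 / ?r) + (\<Sum>x\<in>\<Omega> - {x0}. pmf D x * log 2 (1 / pmf D x))"
    using H_def' sum.remove[OF fin x0, of "\<lambda>x. pmf D x * log 2 (1 / pmf D x)"] by simp
  show ?thesis
  proof (cases "?r = 1")
    case True
    have "(\<Sum>x\<in>\<Omega> - {x0}. pmf D x) = 0" using sumS True by simp
    then have z: "\<And>x. x \<in> \<Omega> - {x0} \<Longrightarrow> pmf D x = 0"
      using fin by (subst (asm) sum_nonneg_eq_0_iff) auto
    have "H = 0" using Hsplit True z by simp
    then show ?thesis using True \<delta>0 by (simp add: branch_def)
  next
    case False
    define c where "c = 1 - ?r"
    have c0: "0 < c" using False pmf_le_1[of D x0] by (simp add: c_def)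
    have c1: "c \<le> 1/2" using hv by (simp add: c_def)
    have ne: "set_pmf D \<inter> (\<Omega> - {x0}) \<noteq> {}"
    proof
      assume "set_pmf D \<inter> (\<Omega> - {x0}) = {}"
      then have "\<And>x. x \<in> \<Omega> - {x0} \<Longrightarrow> pmf D x = 0" by (auto simp: set_pmf_iff)
      then have "(\<Sum>x\<in>\<Omega> - {x0}. pmf D x) = 0" by simp
      then show False using sumS c0 by (simp add: c_def)
    qed
    have finS: "finite (\<Omega> - {x0})" using fin by simp
    have pS: "measure_pmf.prob D (\<Omega> - {x0}) = c" using prob_fin_set[OF finS] sumS by (simp add: c_def)
    define q where "q x = pmf D x / c" for x
    have cq: "\<And>x. c * q x = pmf D x" using c0 by (simp add: q_def)
    define \<mu> where "\<mu> = (\<Sum>x\<in>\<Omega> - {x0}. q x * log 2 (1 / (c * q x)))"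
    have cardS: "real (card (\<Omega> - {x0})) \<le> 2 powr m"
      using card_eq card_mono[OF fin, of "\<Omega> - {x0}"] by (metis Diff_subset of_nat_le_iff)
    have sq: "(\<Sum>x\<in>\<Omega> - {x0}. q x) = 1"
      using sumS c0 by (simp add: q_def sum_divide_distrib[symmetric] c_def)
    have hv': "\<mu> \<ge> 1 \<and> (\<Sum>x\<in>\<Omega> - {x0}. q x * (log 2 (1 / (c * q x)) - \<mu>)^2) \<le> (m + log 2 (m + log 2 m + 2.5)) * \<mu>^2"
      by (rule heavy_var[OF finS cardS m2' _ sq c0 c1 \<mu>_def]) (simp add: q_def c0 less_imp_le)
    let ?K = "m + log 2 (m + log 2 m + 2.5)"
    let ?t = "t_heavy m \<epsilon>"
    have K: "?K \<ge> m + 2" using K_heavy_ge[OF m2'] .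
    have tK: "real ?t * \<epsilon>\<^sup>2 / 6 \<ge> ?K" unfolding t_heavy_def using t_ge[OF \<epsilon>, of ?K] K m2' by simp
    have tp: "?t > 0" unfolding t_heavy_def using t_pos[OF \<epsilon>, of ?K] K m2' by simp
    have \<mu>e: "\<mu> = measure_pmf.expectation (PROC D (\<Omega> - {x0})) (\<lambda>y. log 2 (1 / snd y))"
      using exp_PROC[OF finS ne, of "\<lambda>r. log 2 (1/r)"] pS c0 by (simp add: \<mu>_def cq q_def)
    have V: "measure_pmf.expectation (PROC D (\<Omega> - {x0})) (\<lambda>y. (log 2 (1 / snd y) - \<mu>)\<^sup>2)
              \<le> real ?t * \<epsilon>\<^sup>2 * \<mu>\<^sup>2 / 6"
    proof -
      have "measure_pmf.expectation (PROC D (\<Omega> - {x0})) (\<lambda>y. (log 2 (1 / snd y) - \<mu>)\<^sup>2)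
          = (\<Sum>x\<in>\<Omega> - {x0}. q x * (log 2 (1 / (c * q x)) - \<mu>)^2)"
        using exp_PROC[OF finS ne, of "\<lambda>r. (log 2 (1/r) - \<mu>)^2"] pS c0 by (simp add: cq q_def)
      also have "\<dots> \<le> ?K * \<mu>^2" using hv' by simp
      also have "\<dots> \<le> (real ?t * \<epsilon>\<^sup>2 / 6) * \<mu>^2" using tK by (intro mult_right_mono) auto
      finally show ?thesis by simp
    qed
    have SE: "measure_pmf.prob (SampleEst D \<Omega> {x0} ?t (0.9 * \<delta>)) {z. (1 - \<epsilon>) * \<mu> \<le> z \<and> z \<le> (1 + \<epsilon>) * \<mu>} \<ge> 1 - 0.9 * \<delta>"
      by (rule SampleEst_good[OF finD ne tp \<epsilon> _ _ \<mu>e _ V]) (use \<delta>0 \<delta>1 hv' in auto)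
    have HH: "H = ?r * log 2 (1 / ?r) + c * \<mu>"
      using Hsplit c0 by (simp add: \<mu>_def cq sum_distrib_left q_def mult.assoc[symmetric])
    have rl: "?r * log 2 (1 / ?r) \<ge> 0" using hv pmf_le_1[of D x0] by simp
    have subset: "{z. (1 - \<epsilon>) * \<mu> \<le> z \<and> z \<le> (1 + \<epsilon>) * \<mu>}
        \<subseteq> (\<lambda>h. (1 - ?r) * h + ?r * log 2 (1 / ?r)) -` G"
    proof
      fix z assume "z \<in> {z. (1 - \<epsilon>) * \<mu> \<le> z \<and> z \<le> (1 + \<epsilon>) * \<mu>}"
      then have z1: "(1 - \<epsilon>) * \<mu> \<le> z" and z2: "z \<le> (1 + \<epsilon>) * \<mu>" by auto
      have a: "c * ((1 - \<epsilon>) * \<mu>) \<le> c * z" using z1 c0 by (intro mult_left_mono) auto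
      have b: "c * z \<le> c * ((1 + \<epsilon>) * \<mu>)" using z2 c0 by (intro mult_left_mono) auto
      have erl: "\<epsilon> * (?r * log 2 (1 / ?r)) \<ge> 0" using rl \<epsilon> by simp
      have "(1 - \<epsilon>) * H \<le> c * z + ?r * log 2 (1 / ?r)"
        using a rl \<epsilon> unfolding HH by (simp add: algebra_simps, insert erl, linarith)
      moreover have "c * z + ?r * log 2 (1 / ?r) \<le> (1 + \<epsilon>) * H"
        using b rl \<epsilon> unfolding HH by (simp add: algebra_simps, insert erl, linarith)
      ultimately show "z \<in> (\<lambda>h. (1 - ?r) * h + ?r * log 2 (1 / ?r)) -` G" by (simp add: c_def)
    qed
    have "measure_pmf.prob (branch x0 ?r) G
        = measure_pmf.prob (SampleEst D \<Omega> {x0} ?t (0.9 * \<delta>)) ((\<lambda>h. (1 - ?r) * h + ?r * log 2 (1 / ?r)) -` G)"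
      using False by (simp add: branch_def m_def)
    also have "\<dots> \<ge> measure_pmf.prob (SampleEst D \<Omega> {x0} ?t (0.9 * \<delta>)) {z. (1 - \<epsilon>) * \<mu> \<le> z \<and> z \<le> (1 + \<epsilon>) * \<mu>}"
      by (rule measure_pmf.finite_measure_mono[OF subset]) simp
    finally show ?thesis using SE by linarith
  qed
qed

lemma cond_eq: "cond_pmf D \<Omega> = D"
proof (rule pmf_eqI)
  fix x
  have ne: "set_pmf D \<inter> \<Omega> \<noteq> {}" using sub set_pmf_not_empty[of D] by auto
  have pO: "measure_pmf.prob D \<Omega> = 1" using prob_fin_set[OF fin] sum1 by simp
  show "pmf (cond_pmf D \<Omega>) x = pmf D x"
    using pmf_cond[OF ne, of x] pO sub by (auto simp: set_pmf_iff)
qed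

lemma EE_Suc: "EE_loop D \<Omega> \<epsilon> \<delta> (Suc k) =
   bind_pmf D (\<lambda>x. if pmf D x > 1/2 then branch x (pmf D x) else EE_loop D \<Omega> \<epsilon> \<delta> k)"
  unfolding branch_def by (simp add: PROC_def cond_eq bind_map_pmf)

lemma no_heavy:
  assumes light: "\<And>x. pmf D x \<le> 1/2"
  shows "EE_loop D \<Omega> \<epsilon> \<delta> k = EE_loop D \<Omega> \<epsilon> \<delta> 0"
proof (induction k)
  case (Suc k)
  have "(\<lambda>x. if pmf D x > 1/2 then branch x (pmf D x) else EE_loop D \<Omega> \<epsilon> \<delta> k) = (\<lambda>x. EE_loop D \<Omega> \<epsilon> \<delta> k)"
  proof
    fix x show "(if pmf D x > 1/2 then branch x (pmf D x) else EE_loop D \<Omega> \<epsilon> \<delta> k) = EE_loop D \<Omega> \<epsilon> \<delta> k"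
      using light[of x] by simp
  qed
  then show ?case using Suc by (simp only: EE_Suc bind_pmf_const)
qed simp

lemma heavy_loop:
  assumes hv: "pmf D x0 > 1/2"
  shows "measure_pmf.prob (EE_loop D \<Omega> \<epsilon> \<delta> k) G \<ge> 1 - 0.9 * \<delta> - (1 - pmf D x0)^k"
proof (induction k)
  case 0
  have "(1 - pmf D x0)^0 = 1" by simp
  then show ?case using \<delta>0 measure_nonneg[of "measure_pmf (EE_loop D \<Omega> \<epsilon> \<delta> 0)" G] by linarith
next
  case (Suc k)
  let ?p = "pmf D x0"
  let ?F = "\<lambda>x. if pmf D x > 1/2 then branch x (pmf D x) else EE_loop D \<Omega> \<epsilon> \<delta> k"
  let ?a = "1 - 0.9 * \<delta> - (1 - ?p)^k"
  let ?v = "\<lambda>x. ?a + (if x = x0 then (1 - ?p)^k else 0)"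
  have x0: "x0 \<in> set_pmf D" using hv by (auto simp: set_pmf_iff)
  have other: "\<And>x. x \<in> set_pmf D \<Longrightarrow> x \<noteq> x0 \<Longrightarrow> pmf D x \<le> 1/2"
  proof -
    fix x assume "x \<in> set_pmf D" "x \<noteq> x0"
    have "measure_pmf.prob D {x, x0} = pmf D x + pmf D x0"
      using \<open>x \<noteq> x0\<close> by (simp add: measure_measure_pmf_finite)
    moreover have "measure_pmf.prob D {x, x0} \<le> 1" by simp
    ultimately show "pmf D x \<le> 1/2" using hv by simp
  qed
  have "measure_pmf.prob (EE_loop D \<Omega> \<epsilon> \<delta> (Suc k)) G
      = (\<Sum>x\<in>set_pmf D. pmf D x * measure_pmf.prob (?F x) G)"
    unfolding EE_Suc by (rule prob_bind_fin[OF finD])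
  also have "\<dots> \<ge> (\<Sum>x\<in>set_pmf D. pmf D x * ?v x)"
  proof (intro sum_mono mult_left_mono)
    fix x assume x: "x \<in> set_pmf D"
    show "?v x \<le> measure_pmf.prob (?F x) G"
    proof (cases "x = x0")
      case True
      then show ?thesis using heavy_branch[OF hv] hv by simp
    next
      case False
      then show ?thesis using other[OF x False] Suc by simp
    qed
  qed simp
  also have "(\<Sum>x\<in>set_pmf D. pmf D x * ?v x) = ?a * (\<Sum>x\<in>set_pmf D. pmf D x) + ?p * (1 - ?p)^k"
  proof -
    have "(\<Sum>x\<in>set_pmf D. pmf D x * ?v x) = (\<Sum>x\<in>set_pmf D. pmf D x * ?a + (if x = x0 then pmf D x * (1 - ?p)^k else 0))"
      by (intro sum.cong refl) (simp add: distrib_left)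
    also have "\<dots> = (\<Sum>x\<in>set_pmf D. pmf D x * ?a) + (\<Sum>x\<in>set_pmf D. (if x = x0 then pmf D x * (1 - ?p)^k else 0))"
      by (rule sum.distrib)
    also have "(\<Sum>x\<in>set_pmf D. (if x = x0 then pmf D x * (1 - ?p)^k else 0)) = ?p * (1 - ?p)^k"
      using x0 finD by (simp add: sum.delta)
    also have "(\<Sum>x\<in>set_pmf D. pmf D x * ?a) = ?a * (\<Sum>x\<in>set_pmf D. pmf D x)"
      by (simp add: sum_distrib_right mult.commute)
    finally show ?thesis .
  qed
  also have "\<dots> = 1 - 0.9 * \<delta> - (1 - ?p)^Suc k"
    using sum_pmf_fin[OF finD] by (simp add: algebra_simps)
  finally show ?case .
qed

lemma main_ctx0:
  "measure_pmf.prob (EntropyEstimation D \<Omega> \<epsilon> \<delta>) G \<ge> 1 - \<delta>"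
proof -
  define k where "k = nat \<lceil>log 2 (10 / \<delta>)\<rceil>"
  have EE: "EntropyEstimation D \<Omega> \<epsilon> \<delta> = EE_loop D \<Omega> \<epsilon> \<delta> k"
    by (simp add: EntropyEstimation_def k_def)
  show ?thesis
  proof (cases "\<exists>x0. pmf D x0 > 1/2")
    case True
    then obtain x0 where hv: "pmf D x0 > 1/2" by auto
    have "(1 - pmf D x0)^k \<le> (1/2)^k"
      using hv pmf_le_1[of D x0] by (intro power_mono) auto
    also have "(1/2::real)^k \<le> \<delta> / 10"
    proof -
      have "(2::real)^k = 2 powr real k" by (simp add: powr_realpow)
      also have "\<dots> \<ge> 2 powr log 2 (10 / \<delta>)"
        unfolding k_def by (intro powr_mono) (auto, linarith)
      also have "2 powr log 2 (10 / \<delta>) = 10 / \<delta>" using \<delta>0 by simp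
      finally have "(2::real)^k \<ge> 10 / \<delta>" .
      then show ?thesis using \<delta>0 by (simp add: power_one_over field_simps)
    qed
    finally show ?thesis using heavy_loop[OF hv, of k] EE by simp
  next
    case False
    then have light: "\<And>x. pmf D x \<le> 1/2" by (auto simp: not_less)
    have "measure_pmf.prob (EntropyEstimation D \<Omega> \<epsilon> \<delta>) G = measure_pmf.prob (EE_loop D \<Omega> \<epsilon> \<delta> 0) G"
      unfolding EE by (simp only: no_heavy[OF light, of k])
    then show ?thesis using light_case[OF light] \<delta>0 by linarith
  qed
qed

lemma main_ctx:
  "measure_pmf.prob (EntropyEstimation D \<Omega> \<epsilon> \<delta>)
           {h. (1 - \<epsilon>) * shannon_entropy D \<Omega> \<le> h \<and> h \<le> (1 + \<epsilon>) * shannon_entropy D \<Omega>}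
         \<ge> 1 - \<delta>"
  using main_ctx0 unfolding H_def .

end

theorem mainTheorem4:
  fixes D :: "'a pmf" and \<Omega> :: "'a set" and \<epsilon> \<delta> :: real
  assumes "finite \<Omega>"
    and "set_pmf D \<subseteq> \<Omega>"
    and "log 2 (real (card \<Omega>)) \<ge> 2"
    and "\<epsilon> > 0" and "0 < \<delta>" and "\<delta> < 1"
  shows "measure_pmf.prob (EntropyEstimation D \<Omega> \<epsilon> \<delta>)
           {h. (1 - \<epsilon>) * shannon_entropy D \<Omega> \<le> h \<and> h \<le> (1 + \<epsilon>) * shannon_entropy D \<Omega>}
         \<ge> 1 - \<delta>"
  by (rule main_ctx[OF assms])

end
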